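(* The relation $\equiv_{\mathrm{lps}}$ on $\mathcal{A}^*$ is the smallest congruence on $\mathcal{A}^*$ containing $\mathcal{R}_{\mathrm{lps}}$, and the relation $\equiv_{\mathrm{rps}}$ on $\mathcal{A}^*$ is the smallest congruence on $\mathcal{A}^*$ containing $\mathcal{R}_{\mathrm{rps}}$.
   Context: Let $\mathcal{A}=\{1<2<3<\cdots\}$ be the positive integers viewed as a totally ordered alphabet. An lPS tableau is a finite (possibly empty) sequence of nonempty bottom-justified columns of boxes filled with elements of $\mathcal{A}$, such that the entries of each column are strictly decreasing from top to bottom and the bottom entries of the columns form a weakly increasing sequence from left to right. An rPS tableau is defined in the same way but with columns weakly decreasing from top to bottom and the bottom row strictly increasing from left to right. Right insertion of a symbol $a$ into an lPS tableau $B$: if $a$ is greater than or equal to every entry of the bottom row, append a new column consisting of $a$ at the right end; otherwise, let $z$ be the leftmost bottom-row entry with $z>a$ and put $a$ in a new box at the bottom of the column of $z$ (the previous entries of that column move up one box). Right insertion into an rPS tableau is the same except that a new column is created iff $a$ is strictly greater than every bottom-row entry, and otherwise $z$ is the leftmost bottom-row entry with $z\geq a$. For a word $w=w_1\cdots w_k$, $\mathfrak{R}_\ell(w)$ (resp. $\mathfrak{R}_r(w)$) is obtained by starting with the empty lPS (resp. rPS) tableau and right-inserting $w_1,\dots,w_k$ in order. Define $u\equiv_{\mathrm{lps}}v\iff\mathfrak{R}_\ell(u)=\mathfrak{R}_\ell(v)$ and $u\equiv_{\mathrm{rps}}v\iff\mathfrak{R}_r(u)=\mathfrak{R}_r(v)$.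 $\mathcal{R}_{\mathrm{lps}}=\{(yux,yxu): m\geq1,\ x,y,u_1,\dots,u_m\in\mathcal{A},\ u=u_m\cdots u_1,\ x<y\leq u_1<\cdots<u_m\}$ and $\mathcal{R}_{\mathrm{rps}}=\{(yux,yxu): m\geq1,\ x,y,u_1,\dots,u_m\in\mathcal{A},\ u=u_m\cdots u_1,\ x\leq y<u_1\leq\cdots\leq u_m\}$. *)

theory Defs
  imports Main
begin

text \<open>A PS tableau is a list of columns (left to right); each
  column is stored bottom-first, so its head is the bottom-row entry.\<close>

definition words :: "nat list set" where
  "words = {w. \<forall>a\<in>set w. 0 < a}"

fun lins :: "nat list list \<Rightarrow> nat \<Rightarrow> nat list list" where
  "lins [] a = [[a]]"
| "lins (c # cs) a = (if a < hd c then (a # c) # cs else c # lins cs a)"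

fun rins :: "nat list list \<Rightarrow> nat \<Rightarrow> nat list list" where
  "rins [] a = [[a]]"
| "rins (c # cs) a = (if a \<le> hd c then (a # c) # cs else c # rins cs a)"

definition R_l :: "nat list \<Rightarrow> nat list list" where
  "R_l w = foldl lins [] w"

definition R_r :: "nat list \<Rightarrow> nat list list" where
  "R_r w = foldl rins [] w"

definition lps_equiv :: "nat list \<Rightarrow> nat list \<Rightarrow> bool" where
  "lps_equiv u v \<longleftrightarrow> R_l u = R_l v"

definition rps_equiv :: "nat list \<Rightarrow> nat list \<Rightarrow> bool" where
  "rps_equiv u v \<longleftrightarrow> R_r u = R_r v"

text \<open>v = [u_1, ..., u_m], u = u_m ... u_1 = rev v.\<close>
definition R_lps :: "(nat list \<times> nat list) set" where
  "R_lps = {([y] @ rev v @ [x], [y, x] @ rev v) | x y v.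
      v \<noteq> [] \<and> 0 < x \<and> x < y \<and> y \<le> hd v \<and> sorted_wrt (<) v}"

definition R_rps :: "(nat list \<times> nat list) set" where
  "R_rps = {([y] @ rev v @ [x], [y, x] @ rev v) | x y v.
      v \<noteq> [] \<and> 0 < x \<and> x \<le> y \<and> y < hd v \<and> sorted_wrt (\<le>) v}"

definition is_congruence :: "(nat list \<times> nat list) set \<Rightarrow> bool" where
  "is_congruence \<rho> \<longleftrightarrow> \<rho> \<subseteq> words \<times> words \<and> equiv words \<rho> \<and>
     (\<forall>u v s t. (u, v) \<in> \<rho> \<longrightarrow> s \<in> words \<longrightarrow> t \<in> words \<longrightarrow> (s @ u @ t, s @ v @ t) \<in> \<rho>)"

definition least_congruence :: "(nat list \<times> nat list) set \<Rightarrow> (nat list \<times> nat list) set" where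
  "least_congruence R = \<Inter> {\<rho>. is_congruence \<rho> \<and> R \<subseteq> \<rho>}"

end

theory Submission
  imports Defs
begin

lemma words_iff: "xs \<in> words \<longleftrightarrow> (\<forall>a\<in>set xs. 0 < a)"
  by (simp add: words_def)

lemma lc_mem: "p \<in> least_congruence R \<longleftrightarrow> (\<forall>\<rho>. is_congruence \<rho> \<and> R \<subseteq> \<rho> \<longrightarrow> p \<in> \<rho>)"
  by (auto simp: least_congruence_def)

lemma lc_base: "p \<in> R \<Longrightarrow> p \<in> least_congruence R"
  by (auto simp: lc_mem)

lemma lc_refl: "u \<in> words \<Longrightarrow> (u, u) \<in> least_congruence R"
  unfolding lc_mem is_congruence_def equiv_def refl_on_def by simp

lemma lc_sym: "(u, v) \<in> least_congruence R \<Longrightarrow> (v, u) \<in> least_congruence R"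
  unfolding lc_mem is_congruence_def equiv_def by (meson symD)

lemma lc_trans: "(u, v) \<in> least_congruence R \<Longrightarrow> (v, w) \<in> least_congruence R \<Longrightarrow> (u, w) \<in> least_congruence R"
  unfolding lc_mem is_congruence_def equiv_def by (meson transD)

lemma lc_ctx: "(u, v) \<in> least_congruence R \<Longrightarrow> s \<in> words \<Longrightarrow> t \<in> words \<Longrightarrow> (s @ u @ t, s @ v @ t) \<in> least_congruence R"
  unfolding lc_mem is_congruence_def by simp

lemma lc_words: "R \<subseteq> words \<times> words \<Longrightarrow> p \<in> least_congruence R \<Longrightarrow> p \<in> words \<times> words"
proof -
  assume R: "R \<subseteq> words \<times> words" and p: "p \<in> least_congruence R"
  have "is_congruence (words \<times> words)"
    unfolding is_congruence_def equiv_def refl_on_def sym_def trans_def by (auto simp add: words_iff)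
  with R p show ?thesis unfolding lc_mem by simp
qed

definition rd :: "nat list list \<Rightarrow> nat list" where
  "rd T = concat (map rev T)"

section \<open>lPS\<close>

lemma L1: "(\<forall>c\<in>set A. hd c \<le> a) \<Longrightarrow> lins (A @ B) a = A @ lins B a"
  by (induction A) auto

lemma L2: "a < hd D \<Longrightarrow> lins (A @ D # B) a = lins (A @ [D]) a @ B"
  by (induction A) auto

lemma L3: "(\<forall>c\<in>set A. \<forall>a\<in>set us. hd c \<le> a) \<Longrightarrow> foldl lins (A @ B) us = A @ foldl lins B us"
  by (induction us arbitrary: B) (auto simp: L1)

lemma L4: "\<exists>P D Q. lins T y = P @ D # Q \<and> hd D = y \<and> (\<forall>c\<in>set P. hd c \<le> y)"
proof (induction T)
  case Nil
  show ?case by (rule exI[of _ "[]"], rule exI[of _ "[y]"], rule exI[of _ "[]"]) simp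
next
  case (Cons c cs)
  show ?case
  proof (cases "y < hd c")
    case True
    then show ?thesis by (intro exI[of _ "[]"] exI[of _ "y # c"] exI[of _ cs]) simp
  next
    case False
    from Cons obtain P D Q where "lins cs y = P @ D # Q" "hd D = y" "\<forall>c\<in>set P. hd c \<le> y" by blast
    with False show ?thesis by (intro exI[of _ "c # P"] exI[of _ D] exI[of _ Q]) auto
  qed
qed

lemma L5: "(\<forall>c\<in>set P. hd c \<le> y) \<Longrightarrow> hd D = y \<Longrightarrow> x < y \<Longrightarrow> \<forall>c\<in>set (lins (P @ [D]) x). hd c \<le> y"
  by (induction P) auto

lemma commute_l:
  assumes xy: "x < y" and yu: "\<forall>u\<in>set us. y \<le> u"
  shows "foldl lins T (y # us @ [x]) = foldl lins T (y # x # us)"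
proof -
  obtain P D Q where PDQ: "lins T y = P @ D # Q" and hD: "hd D = y" and hP: "\<forall>c\<in>set P. hd c \<le> y"
    using L4 by blast
  have h1: "\<forall>c\<in>set (P @ [D]). \<forall>a\<in>set us. hd c \<le> a"
  proof (intro ballI)
    fix c a assume c: "c \<in> set (P @ [D])" and a: "a \<in> set us"
    have "hd c \<le> y" using c hP hD by auto
    moreover have "y \<le> a" using yu a by blast
    ultimately show "hd c \<le> a" by (rule order_trans)
  qed
  have h2: "\<forall>c\<in>set (lins (P @ [D]) x). \<forall>a\<in>set us. hd c \<le> a"
  proof (intro ballI)
    fix c a assume c: "c \<in> set (lins (P @ [D]) x)" and a: "a \<in> set us"
    have "hd c \<le> y" using L5[OF hP hD xy] c by blast
    moreover have "y \<le> a" using yu a by blast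
    ultimately show "hd c \<le> a" by (rule order_trans)
  qed
  have xD: "x < hd D" using hD xy by simp
  have e1: "lins T y = (P @ [D]) @ Q" using PDQ by simp
  have L: "foldl lins T (y # us @ [x]) = lins (foldl lins ((P @ [D]) @ Q) us) x"
    by (simp only: foldl_Cons foldl_append e1 foldl_Nil)
  have L': "lins (foldl lins ((P @ [D]) @ Q) us) x = lins (P @ D # foldl lins Q us) x"
    using L3[OF h1, of Q] by simp
  have R: "foldl lins T (y # x # us) = foldl lins (lins (P @ D # Q) x) us"
    by (simp only: foldl_Cons PDQ)
  show ?thesis
    unfolding L L' R L2[OF xD, of P Q] L2[OF xD, of P "foldl lins Q us"] L3[OF h2] ..
qed

definition valid_l :: "nat list list \<Rightarrow> bool" where
  "valid_l T \<longleftrightarrow> (\<forall>c\<in>set T. c \<noteq> [] \<and> sorted_wrt (<) c \<and> (\<forall>z\<in>set c. 0 < z)) \<and> sorted (map hd T)"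

lemma lins_heads: "hd ` set (lins T a) \<subseteq> insert a (hd ` set T)"
  by (induction T) auto

lemma valid_lins: "valid_l T \<Longrightarrow> 0 < a \<Longrightarrow> valid_l (lins T a)"
proof (induction T)
  case Nil then show ?case by (simp add: valid_l_def)
next
  case (Cons c cs)
  show ?case
  proof (cases "a < hd c")
    case True
    then show ?thesis using Cons.prems
      by (cases c) (auto simp: valid_l_def)
  next
    case False
    have v: "valid_l cs" using Cons.prems by (simp add: valid_l_def)
    have "valid_l (lins cs a)" using Cons.IH[OF v Cons.prems(2)] .
    moreover have "\<forall>d\<in>set (lins cs a). hd c \<le> hd d"
      using lins_heads[of cs a] False Cons.prems(1) by (fastforce simp: valid_l_def)
    ultimately show ?thesis using False Cons.prems(1) by (auto simp: valid_l_def)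
  qed
qed

lemma rd_words_l: "valid_l T \<Longrightarrow> rd T \<in> words"
  by (auto simp: valid_l_def rd_def words_iff)

lemma move_l:
  assumes "\<forall>c\<in>set Cs. c \<noteq> [] \<and> sorted_wrt (<) c \<and> (\<forall>z\<in>set c. 0 < z)"
    "sorted (y # map hd Cs)" "a < y" "0 < a"
  shows "([y] @ rd Cs @ [a], [y, a] @ rd Cs) \<in> least_congruence R_lps"
  using assms
proof (induction Cs arbitrary: y)
  case Nil
  then show ?case by (auto intro!: lc_refl simp: rd_def words_iff)
next
  case (Cons c Ds)
  obtain b cs where c: "c = b # cs" using Cons.prems(1) by (cases c) auto
  have p1: "\<forall>c\<in>set Ds. c \<noteq> [] \<and> sorted_wrt (<) c \<and> (\<forall>z\<in>set c. 0 < z)"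
    using Cons.prems(1) by simp
  have p2: "sorted (b # map hd Ds)" using Cons.prems(2) c by simp
  have p3: "a < b" using Cons.prems(2,3) c by simp
  note IH = Cons.IH[OF p1 p2 p3 Cons.prems(4)]
  have w1: "[y] @ rev cs \<in> words" using Cons.prems c by (auto simp: words_iff)
  have w2: "rd Ds \<in> words" using Cons.prems by (auto simp: words_iff rd_def)
  have s1: "([y] @ rev c @ rd Ds @ [a], [y] @ rev c @ [a] @ rd Ds) \<in> least_congruence R_lps"
    using lc_ctx[OF IH w1, of "[]"] c by (simp add: words_iff)
  have rel: "([y] @ rev c @ [a], [y, a] @ rev c) \<in> R_lps"
  proof -
    have "c \<noteq> []" "0 < a" "a < y" "y \<le> hd c" "sorted_wrt (<) c"
      using Cons.prems c by auto
    then show ?thesis unfolding R_lps_def by blast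
  qed
  have s2: "([y] @ rev c @ [a] @ rd Ds, [y, a] @ rev c @ rd Ds) \<in> least_congruence R_lps"
    using lc_ctx[OF lc_base[OF rel], of "[]" "rd Ds"] w2 by (simp add: words_iff)
  show ?case using lc_trans[OF s1 s2] c by (simp add: rd_def)
qed

lemma step_l: "valid_l T \<Longrightarrow> 0 < a \<Longrightarrow> (rd T @ [a], rd (lins T a)) \<in> least_congruence R_lps"
proof (induction T)
  case Nil then show ?case by (auto intro!: lc_refl simp: rd_def words_iff)
next
  case (Cons c Ds)
  have v: "valid_l Ds" using Cons.prems by (simp add: valid_l_def)
  show ?case
  proof (cases "a < hd c")
    case True
    obtain b cs where c: "c = b # cs" using Cons.prems(1) by (cases c) (auto simp: valid_l_def)
    have m: "([b] @ rd Ds @ [a], [b, a] @ rd Ds) \<in> least_congruence R_lps"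
      using Cons.prems c True by (intro move_l) (auto simp: valid_l_def rd_def)
    have w: "rev cs \<in> words" using Cons.prems c by (auto simp: valid_l_def words_iff)
    show ?thesis using lc_ctx[OF m w, of "[]"] True c by (simp add: rd_def words_iff)
  next
    case False
    have w: "rev c \<in> words" using Cons.prems by (auto simp: valid_l_def words_iff)
    show ?thesis using lc_ctx[OF Cons.IH[OF v Cons.prems(2)] w, of "[]"] False
      by (simp add: rd_def words_iff)
  qed
qed

lemma valid_R_l: "w \<in> words \<Longrightarrow> valid_l (foldl lins [] w)"
proof (induction w rule: rev_induct)
  case Nil then show ?case by (simp add: valid_l_def)
next
  case (snoc a w) then show ?case by (simp add: valid_lins words_iff)
qed

lemma to_rd_l: "w \<in> words \<Longrightarrow> (w, rd (R_l w)) \<in> least_congruence R_lps"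
proof (induction w rule: rev_induct)
  case Nil then show ?case by (auto intro!: lc_refl simp: rd_def R_l_def words_iff)
next
  case (snoc a w)
  have w: "w \<in> words" and a: "0 < a" using snoc.prems by (auto simp: words_iff)
  have v: "valid_l (R_l w)" using valid_R_l[OF w] by (simp add: R_l_def)
  have s1: "(w @ [a], rd (R_l w) @ [a]) \<in> least_congruence R_lps"
    using lc_ctx[OF snoc.IH[OF w], of "[]" "[a]"] a by (simp add: words_iff)
  note s2 = step_l[OF v a]
  show ?case using lc_trans[OF s1 s2] by (simp add: R_l_def)
qed

section \<open>rPS\<close>

lemma L1r: "(\<forall>c\<in>set A. hd c < a) \<Longrightarrow> rins (A @ B) a = A @ rins B a"
  by (induction A) auto

lemma L2r: "a \<le> hd D \<Longrightarrow> rins (A @ D # B) a = rins (A @ [D]) a @ B"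
  by (induction A) auto

lemma L3r: "(\<forall>c\<in>set A. \<forall>a\<in>set us. hd c < a) \<Longrightarrow> foldl rins (A @ B) us = A @ foldl rins B us"
  by (induction us arbitrary: B) (auto simp: L1r)

lemma L4r: "\<exists>P D Q. rins T y = P @ D # Q \<and> hd D = y \<and> (\<forall>c\<in>set P. hd c < y)"
proof (induction T)
  case Nil
  show ?case by (rule exI[of _ "[]"], rule exI[of _ "[y]"], rule exI[of _ "[]"]) simp
next
  case (Cons c cs)
  show ?case
  proof (cases "y \<le> hd c")
    case True
    then show ?thesis by (intro exI[of _ "[]"] exI[of _ "y # c"] exI[of _ cs]) simp
  next
    case False
    from Cons obtain P D Q where "rins cs y = P @ D # Q" "hd D = y" "\<forall>c\<in>set P. hd c < y" by blast
    with False show ?thesis by (intro exI[of _ "c # P"] exI[of _ D] exI[of _ Q]) auto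
  qed
qed

lemma L5r: "(\<forall>c\<in>set P. hd c < y) \<Longrightarrow> hd D = y \<Longrightarrow> x \<le> y \<Longrightarrow> \<forall>c\<in>set (rins (P @ [D]) x). hd c \<le> y"
  by (induction P) auto

lemma commute_r:
  assumes xy: "x \<le> y" and yu: "\<forall>u\<in>set us. y < u"
  shows "foldl rins T (y # us @ [x]) = foldl rins T (y # x # us)"
proof -
  obtain P D Q where PDQ: "rins T y = P @ D # Q" and hD: "hd D = y" and hP: "\<forall>c\<in>set P. hd c < y"
    using L4r by blast
  have h1: "\<forall>c\<in>set (P @ [D]). \<forall>a\<in>set us. hd c < a"
  proof (intro ballI)
    fix c a assume c: "c \<in> set (P @ [D])" and a: "a \<in> set us"
    have "hd c \<le> y" using c hP hD by force
    moreover have "y < a" using yu a by blast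
    ultimately show "hd c < a" by (rule le_less_trans)
  qed
  have h2: "\<forall>c\<in>set (rins (P @ [D]) x). \<forall>a\<in>set us. hd c < a"
  proof (intro ballI)
    fix c a assume c: "c \<in> set (rins (P @ [D]) x)" and a: "a \<in> set us"
    have "hd c \<le> y" using L5r[OF hP hD xy] c by blast
    moreover have "y < a" using yu a by blast
    ultimately show "hd c < a" by (rule le_less_trans)
  qed
  have xD: "x \<le> hd D" using hD xy by simp
  have e1: "rins T y = (P @ [D]) @ Q" using PDQ by simp
  have L: "foldl rins T (y # us @ [x]) = rins (foldl rins ((P @ [D]) @ Q) us) x"
    by (simp only: foldl_Cons foldl_append e1 foldl_Nil)
  have L': "rins (foldl rins ((P @ [D]) @ Q) us) x = rins (P @ D # foldl rins Q us) x"
    using L3r[OF h1, of Q] by simp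
  have R: "foldl rins T (y # x # us) = foldl rins (rins (P @ D # Q) x) us"
    by (simp only: foldl_Cons PDQ)
  show ?thesis
    unfolding L L' R L2r[OF xD, of P Q] L2r[OF xD, of P "foldl rins Q us"] L3r[OF h2] ..
qed

definition valid_r :: "nat list list \<Rightarrow> bool" where
  "valid_r T \<longleftrightarrow> (\<forall>c\<in>set T. c \<noteq> [] \<and> sorted_wrt (\<le>) c \<and> (\<forall>z\<in>set c. 0 < z)) \<and> sorted_wrt (<) (map hd T)"

lemma rins_heads: "hd ` set (rins T a) \<subseteq> insert a (hd ` set T)"
  by (induction T) auto

lemma valid_rins: "valid_r T \<Longrightarrow> 0 < a \<Longrightarrow> valid_r (rins T a)"
proof (induction T)
  case Nil then show ?case by (simp add: valid_r_def)
next
  case (Cons c cs)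
  show ?case
  proof (cases "a \<le> hd c")
    case True
    then show ?thesis using Cons.prems
      by (cases c) (auto simp: valid_r_def)
  next
    case False
    have v: "valid_r cs" using Cons.prems by (simp add: valid_r_def)
    have "valid_r (rins cs a)" using Cons.IH[OF v Cons.prems(2)] .
    moreover have "\<forall>d\<in>set (rins cs a). hd c < hd d"
      using rins_heads[of cs a] False Cons.prems(1) by (fastforce simp: valid_r_def)
    ultimately show ?thesis using False Cons.prems(1) by (auto simp: valid_r_def)
  qed
qed

lemma rd_words_r: "valid_r T \<Longrightarrow> rd T \<in> words"
  by (auto simp: valid_r_def rd_def words_iff)

lemma move_r:
  assumes "\<forall>c\<in>set Cs. c \<noteq> [] \<and> sorted_wrt (\<le>) c \<and> (\<forall>z\<in>set c. 0 < z)"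
    "sorted_wrt (<) (y # map hd Cs)" "a \<le> y" "0 < a"
  shows "([y] @ rd Cs @ [a], [y, a] @ rd Cs) \<in> least_congruence R_rps"
  using assms
proof (induction Cs arbitrary: y)
  case Nil
  then show ?case by (auto intro!: lc_refl simp: rd_def words_iff)
next
  case (Cons c Ds)
  obtain b cs where c: "c = b # cs" using Cons.prems(1) by (cases c) auto
  have p1: "\<forall>c\<in>set Ds. c \<noteq> [] \<and> sorted_wrt (\<le>) c \<and> (\<forall>z\<in>set c. 0 < z)"
    using Cons.prems(1) by simp
  have p2: "sorted_wrt (<) (b # map hd Ds)" using Cons.prems(2) c by simp
  have p3: "a \<le> b" using Cons.prems(2,3) c by simp
  note IH = Cons.IH[OF p1 p2 p3 Cons.prems(4)]
  have w1: "[y] @ rev cs \<in> words" using Cons.prems c by (auto simp: words_iff)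
  have w2: "rd Ds \<in> words" using Cons.prems by (auto simp: words_iff rd_def)
  have s1: "([y] @ rev c @ rd Ds @ [a], [y] @ rev c @ [a] @ rd Ds) \<in> least_congruence R_rps"
    using lc_ctx[OF IH w1, of "[]"] c by (simp add: words_iff)
  have rel: "([y] @ rev c @ [a], [y, a] @ rev c) \<in> R_rps"
  proof -
    have "c \<noteq> []" "0 < a" "a \<le> y" "y < hd c" "sorted_wrt (\<le>) c"
      using Cons.prems c by auto
    then show ?thesis unfolding R_rps_def by blast
  qed
  have s2: "([y] @ rev c @ [a] @ rd Ds, [y, a] @ rev c @ rd Ds) \<in> least_congruence R_rps"
    using lc_ctx[OF lc_base[OF rel], of "[]" "rd Ds"] w2 by (simp add: words_iff)
  show ?case using lc_trans[OF s1 s2] c by (simp add: rd_def)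
qed

lemma step_r: "valid_r T \<Longrightarrow> 0 < a \<Longrightarrow> (rd T @ [a], rd (rins T a)) \<in> least_congruence R_rps"
proof (induction T)
  case Nil then show ?case by (auto intro!: lc_refl simp: rd_def words_iff)
next
  case (Cons c Ds)
  have v: "valid_r Ds" using Cons.prems by (simp add: valid_r_def)
  show ?case
  proof (cases "a \<le> hd c")
    case True
    obtain b cs where c: "c = b # cs" using Cons.prems(1) by (cases c) (auto simp: valid_r_def)
    have m: "([b] @ rd Ds @ [a], [b, a] @ rd Ds) \<in> least_congruence R_rps"
      using Cons.prems c True by (intro move_r) (auto simp: valid_r_def rd_def)
    have w: "rev cs \<in> words" using Cons.prems c by (auto simp: valid_r_def words_iff)
    show ?thesis using lc_ctx[OF m w, of "[]"] True c by (simp add: rd_def words_iff)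
  next
    case False
    have w: "rev c \<in> words" using Cons.prems by (auto simp: valid_r_def words_iff)
    show ?thesis using lc_ctx[OF Cons.IH[OF v Cons.prems(2)] w, of "[]"] False
      by (simp add: rd_def words_iff)
  qed
qed

lemma valid_R_r: "w \<in> words \<Longrightarrow> valid_r (foldl rins [] w)"
proof (induction w rule: rev_induct)
  case Nil then show ?case by (simp add: valid_r_def)
next
  case (snoc a w) then show ?case by (simp add: valid_rins words_iff)
qed

lemma to_rd_r: "w \<in> words \<Longrightarrow> (w, rd (R_r w)) \<in> least_congruence R_rps"
proof (induction w rule: rev_induct)
  case Nil then show ?case by (auto intro!: lc_refl simp: rd_def R_r_def words_iff)
next
  case (snoc a w)
  have w: "w \<in> words" and a: "0 < a" using snoc.prems by (auto simp: words_iff)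
  have v: "valid_r (R_r w)" using valid_R_r[OF w] by (simp add: R_r_def)
  have s1: "(w @ [a], rd (R_r w) @ [a]) \<in> least_congruence R_rps"
    using lc_ctx[OF snoc.IH[OF w], of "[]" "[a]"] a by (simp add: words_iff)
  note s2 = step_r[OF v a]
  show ?case using lc_trans[OF s1 s2] by (simp add: R_r_def)
qed



definition E_l :: "(nat list \<times> nat list) set" where
  "E_l = {(u, v). u \<in> words \<and> v \<in> words \<and> (\<forall>T. foldl lins T u = foldl lins T v)}"

definition E_r :: "(nat list \<times> nat list) set" where
  "E_r = {(u, v). u \<in> words \<and> v \<in> words \<and> (\<forall>T. foldl rins T u = foldl rins T v)}"

lemma cong_E_l: "is_congruence E_l"
  unfolding is_congruence_def equiv_def refl_on_def sym_def trans_def E_l_def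
  by (auto simp: words_iff)

lemma cong_E_r: "is_congruence E_r"
  unfolding is_congruence_def equiv_def refl_on_def sym_def trans_def E_r_def
  by (auto simp: words_iff)

lemma R_lps_E: "R_lps \<subseteq> E_l"
proof
  fix p assume "p \<in> R_lps"
  then obtain x y v where p: "p = ([y] @ rev v @ [x], [y, x] @ rev v)"
    and h: "v \<noteq> []" "0 < x" "x < y" "y \<le> hd v" "sorted_wrt (<) v"
    unfolding R_lps_def by blast
  obtain h0 t where v: "v = h0 # t" using h(1) by (cases v) auto
  have yu: "\<forall>u\<in>set (rev v). y \<le> u" using h v by auto
  have "\<forall>T. foldl lins T (y # rev v @ [x]) = foldl lins T (y # x # rev v)"
    using commute_l[OF h(3) yu] by blast
  moreover have "[y] @ rev v @ [x] \<in> words" "[y, x] @ rev v \<in> words"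
    using h v yu by (auto simp: words_iff)
  ultimately show "p \<in> E_l" unfolding p E_l_def by simp
qed

lemma R_rps_E: "R_rps \<subseteq> E_r"
proof
  fix p assume "p \<in> R_rps"
  then obtain x y v where p: "p = ([y] @ rev v @ [x], [y, x] @ rev v)"
    and h: "v \<noteq> []" "0 < x" "x \<le> y" "y < hd v" "sorted_wrt (\<le>) v"
    unfolding R_rps_def by blast
  obtain h0 t where v: "v = h0 # t" using h(1) by (cases v) auto
  have yu: "\<forall>u\<in>set (rev v). y < u" using h v by force
  have "\<forall>T. foldl rins T (y # rev v @ [x]) = foldl rins T (y # x # rev v)"
    using commute_r[OF h(3) yu] by blast
  moreover have "[y] @ rev v @ [x] \<in> words" "[y, x] @ rev v \<in> words"
    using h v yu by (auto simp: words_iff)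
  ultimately show "p \<in> E_r" unfolding p E_r_def by simp
qed

theorem theorem3p23:
  shows "{(u, v). u \<in> words \<and> v \<in> words \<and> lps_equiv u v} = least_congruence R_lps
       \<and> {(u, v). u \<in> words \<and> v \<in> words \<and> rps_equiv u v} = least_congruence R_rps"
proof (intro conjI equalityI subsetI)
  fix p assume "p \<in> {(u, v). u \<in> words \<and> v \<in> words \<and> lps_equiv u v}"
  then obtain u v where p: "p = (u, v)" "u \<in> words" "v \<in> words" "R_l u = R_l v"
    by (auto simp: lps_equiv_def)
  show "p \<in> least_congruence R_lps"
  proof -
    have "(rd (R_l u), v) \<in> least_congruence R_lps" using lc_sym[OF to_rd_l[OF p(3)]] p(4) by simp
    then show ?thesis using lc_trans[OF to_rd_l[OF p(2)]] p(1) by simp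
  qed
next
  fix p assume "p \<in> least_congruence R_lps"
  then have "p \<in> E_l" using cong_E_l R_lps_E unfolding least_congruence_def by blast
  then show "p \<in> {(u, v). u \<in> words \<and> v \<in> words \<and> lps_equiv u v}"
    by (auto simp: E_l_def lps_equiv_def R_l_def)
next
  fix p assume "p \<in> {(u, v). u \<in> words \<and> v \<in> words \<and> rps_equiv u v}"
  then obtain u v where p: "p = (u, v)" "u \<in> words" "v \<in> words" "R_r u = R_r v"
    by (auto simp: rps_equiv_def)
  show "p \<in> least_congruence R_rps"
  proof -
    have "(rd (R_r u), v) \<in> least_congruence R_rps" using lc_sym[OF to_rd_r[OF p(3)]] p(4) by simp
    then show ?thesis using lc_trans[OF to_rd_r[OF p(2)]] p(1) by simp
  qed
next
  fix p assume "p \<in> least_congruence R_rps"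
  then have "p \<in> E_r" using cong_E_r R_rps_E unfolding least_congruence_def by blast
  then show "p \<in> {(u, v). u \<in> words \<and> v \<in> words \<and> rps_equiv u v}"
    by (auto simp: E_r_def rps_equiv_def R_r_def)
qed

end
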